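(* For all integers $m\ge2$ and $p\ge1$, $$E\,|C_m(p;\mathbf U_1)-C_m(p-1;\mathbf U_1)|\le 2+16m.$$
   Context: Let $U_1,U_2,\ldots$ be i.i.d. uniform random variables on $[0,1]$ and $\mathbf U_k=(U_k,U_{k+1},\ldots)$ for $k\ge1$. For integers $m\ge1$, $n\ge0$, $k\ge1$, define $C_m(n;\mathbf U_k)$ recursively (in $n$) by $C_m(n;\mathbf U_k)=0$ for $0\le n\le m-1$, and for $n\ge m$, writing $V=\lfloor nU_k\rfloor$, $$C_m(n;\mathbf U_k)=n-1+C_m(V;\mathbf U_{k+1})+C_{m-1-V}(n-1-V;\mathbf U_{k+1})\,\mathbf 1(V<m-1).$$ (This is the number of comparisons made by Quickselect to find the $m$-th smallest of $n$ distinct numbers.) *)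

theory Defs
  imports "HOL-Probability.Probability"
begin

text \<open>Pivot rank V = floor(n U_k), clamped to n-1 (only matters on the null event U_k = 1,
  which is needed for the recursion to be well-founded).  The sequence u encodes
  (U_k, U_{k+1}, ...) with u 0 = U_k.\<close>
definition qs_pivot :: "nat \<Rightarrow> (nat \<Rightarrow> real) \<Rightarrow> nat" where
  "qs_pivot n u = min (nat \<lfloor>real n * u 0\<rfloor>) (n - 1)"

lemma qs_pivot_le: "qs_pivot n u \<le> n - 1"
  by (simp add: qs_pivot_def)

text \<open>Number of comparisons of Quickselect: qsel_cmp m n u = C_m(n; U_k) where u = U_k.
  For m = 0 (not used by the paper) the value is set to 0.\<close>
function qsel_cmp :: "nat \<Rightarrow> nat \<Rightarrow> (nat \<Rightarrow> real) \<Rightarrow> nat" where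
  "qsel_cmp m n u =
     (if n < m \<or> m = 0 then 0
      else n - 1 + qsel_cmp m (qs_pivot n u) (\<lambda>i. u (Suc i))
           + (if qs_pivot n u < m - 1
              then qsel_cmp (m - 1 - qs_pivot n u) (n - 1 - qs_pivot n u) (\<lambda>i. u (Suc i))
              else 0))"
  by pat_completeness auto
termination
  by (relation "Wellfounded.measure (\<lambda>(m, n, u). n)")
     (auto, (metis qs_pivot_le diff_less le_less_trans less_one not_le not_gr0 le_zero_eq)+)

definition unif_seq :: "(nat \<Rightarrow> real) measure" where
  "unif_seq = (\<Pi>\<^sub>M i\<in>UNIV. uniform_measure lborel {0..1})"

end

theory Submission imports Defs begin


declare qsel_cmp.simps[simp del]

abbreviation "Uu \<equiv> uniform_measure lborel {0..1::real}"

lemma prob_Uu: "prob_space Uu"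
  by (intro prob_space_uniform_measure) auto

lemma seq_Uu: "sequence_space Uu"
  unfolding sequence_space_def product_prob_space_def product_sigma_finite_def product_prob_space_axioms_def
  using prob_Uu by (auto simp: prob_space_imp_sigma_finite)

lemma prob_unif_seq: "prob_space unif_seq"
proof -
  interpret US: sequence_space Uu by (rule seq_Uu)
  show ?thesis unfolding unif_seq_def by (rule US.P.prob_space_axioms)
qed

lemma pair_sf: "pair_sigma_finite Uu unif_seq"
proof -
  interpret US: sequence_space Uu by (rule seq_Uu)
  show ?thesis unfolding unif_seq_def
    by (simp add: US.P.sigma_finite_measure_axioms US.M.sigma_finite_measure_axioms pair_sigma_finite.intro)
qed

lemma PiM_iter_U: "distr (Uu \<Otimes>\<^sub>M unif_seq) unif_seq (\<lambda>(s, \<omega>). case_nat s \<omega>) = unif_seq"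
proof -
  interpret US: sequence_space Uu by (rule seq_Uu)
  show ?thesis unfolding unif_seq_def by (rule US.PiM_iter)
qed

lemma meas_shift: "(\<lambda>u. \<lambda>i. u (Suc i)) \<in> measurable unif_seq unif_seq"
  unfolding unif_seq_def by (rule measurable_PiM_single') (auto simp: space_PiM)

lemma meas_pivot: "qs_pivot n \<in> measurable unif_seq (count_space UNIV)"
  unfolding qs_pivot_def unif_seq_def by measurable

lemma meas_qsel: "(\<lambda>u. real (qsel_cmp m n u)) \<in> borel_measurable unif_seq"
proof (induction n arbitrary: m rule: less_induct)
  case (less n)
  define G where "G = (\<lambda>v u. if n < m \<or> m = 0 then 0 else if v < n then
     real (n - 1) + real (qsel_cmp m v (\<lambda>i. u (Suc i))) + (if v < m - 1 then 
     real (qsel_cmp (m - 1 - v) (n - 1 - v) (\<lambda>i. u (Suc i))) else 0) else (0::real))"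
  have eq: "real (qsel_cmp m n u) = G (qs_pivot n u) u" for u
  proof -
    have "n < m \<or> m = 0 \<or> qs_pivot n u < n"
      using qs_pivot_le[of n u] by auto
    then show ?thesis
      by (subst qsel_cmp.simps) (auto simp: G_def)
  qed
  have "(\<lambda>u. G v u) \<in> borel_measurable unif_seq" for v
  proof (cases "v < n")
    case True
    have a: "(\<lambda>u. real (qsel_cmp m v (\<lambda>i. u (Suc i)))) \<in> borel_measurable unif_seq"
      using measurable_compose[OF meas_shift less[OF True]] by simp
    have b: "(\<lambda>u. real (qsel_cmp (m - 1 - v) (n - 1 - v) (\<lambda>i. u (Suc i)))) \<in> borel_measurable unif_seq"
      if "v < m - 1"
      using measurable_compose[OF meas_shift less[of "n - 1 - v"]] True that by simp
    show ?thesis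
    proof (cases "n < m \<or> m = 0")
      case True
      then have "(\<lambda>u. G v u) = (\<lambda>u. 0)" by (simp add: G_def)
      then show ?thesis by simp
    next
      case F: False
      show ?thesis
      proof (cases "v < m - 1")
        case T2: True
        have "(\<lambda>u. G v u) = (\<lambda>u. real (n - 1) + real (qsel_cmp m v (\<lambda>i. u (Suc i)))
            + real (qsel_cmp (m - 1 - v) (n - 1 - v) (\<lambda>i. u (Suc i))))"
          using F T2 True by (simp add: G_def)
        then show ?thesis using a b[OF T2] by (simp only:) (intro borel_measurable_add borel_measurable_const)
      next
        case T2: False
        have "(\<lambda>u. G v u) = (\<lambda>u. real (n - 1) + real (qsel_cmp m v (\<lambda>i. u (Suc i))) + 0)"
          using F T2 True by (simp add: G_def)
        then show ?thesis using a by (simp only:) (intro borel_measurable_add borel_measurable_const)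
      qed
    qed
  next
    case False
    then have nv: "(v < n) = False" by simp
    have "(\<lambda>u. G v u) = (\<lambda>u. 0)" by (simp add: G_def nv cong: if_cong)
    then show ?thesis by simp
  qed
  then have Gm: "(\<lambda>u. G v u) \<in> borel_measurable unif_seq" for v by simp
  have "(\<lambda>u. G (qs_pivot n u) u) \<in> borel_measurable unif_seq"
    by (rule measurable_compose_countable[where f=G and g="qs_pivot n", OF Gm meas_pivot])
  then show ?case unfolding eq .
qed

lemma decomp:
  assumes f: "f \<in> borel_measurable unif_seq"
  shows "(\<integral>\<^sup>+u. f u \<partial>unif_seq) = (\<integral>\<^sup>+x. (\<integral>\<^sup>+w. f (case_nat x w) \<partial>unif_seq) \<partial>Uu)"
proof -
  have "(\<integral>\<^sup>+u. f u \<partial>unif_seq) = (\<integral>\<^sup>+u. f u \<partial>distr (Uu \<Otimes>\<^sub>M unif_seq) unif_seq (\<lambda>(s, \<omega>). case_nat s \<omega>))"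
    unfolding PiM_iter_U ..
  also have "\<dots> = (\<integral>\<^sup>+p. f (case_nat (fst p) (snd p)) \<partial>(Uu \<Otimes>\<^sub>M unif_seq))"
    using f unfolding unif_seq_def
    by (subst nn_integral_distr) (auto simp: split_beta')
  also have "\<dots> = (\<integral>\<^sup>+x. (\<integral>\<^sup>+w. f (case_nat x w) \<partial>unif_seq) \<partial>Uu)"
  proof -
    have cm: "(\<lambda>p. case_nat (fst p) (snd p)) \<in> measurable (Uu \<Otimes>\<^sub>M unif_seq) unif_seq"
      unfolding unif_seq_def by measurable
    have "(\<lambda>p. f (case_nat (fst p) (snd p))) \<in> borel_measurable (Uu \<Otimes>\<^sub>M unif_seq)"
      using measurable_compose[OF cm f] .
    from sigma_finite_measure.nn_integral_fst[OF prob_space_imp_sigma_finite[OF prob_unif_seq] this] show ?thesis by simp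
  qed
  finally show ?thesis .
qed





definition piv :: "nat \<Rightarrow> real \<Rightarrow> nat" where
  "piv n x = min (nat \<lfloor>real n * x\<rfloor>) (n - 1)"

lemma qs_pivot_case: "qs_pivot n (case_nat x w) = piv n x"
  by (simp add: qs_pivot_def piv_def)

lemma floor_facts:
  assumes "0 \<le> x" 
  shows "real (nat \<lfloor>real n * x\<rfloor>) \<le> real n * x" "real n * x < real (nat \<lfloor>real n * x\<rfloor>) + 1"
proof -
  have z: "0 \<le> real n * x" using assms by simp
  have e: "real (nat \<lfloor>real n * x\<rfloor>) = real_of_int \<lfloor>real n * x\<rfloor>" using z by simp
  show "real (nat \<lfloor>real n * x\<rfloor>) \<le> real n * x" "real n * x < real (nat \<lfloor>real n * x\<rfloor>) + 1"
    using e floor_correct[of "real n * x"] by linarith+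
qed

lemma piv_bounds:
  assumes "0 \<le> x" "x \<le> 1" "n \<ge> 1"
  shows "real (piv n x) \<le> real n * x" "real n * x \<le> real (piv n x) + 1"
proof -
  let ?A = "nat \<lfloor>real n * x\<rfloor>"
  have a: "real ?A \<le> real n * x" "real n * x < real ?A + 1" using floor_facts assms by auto
  have nx: "real n * x \<le> real n" using assms by (simp add: mult_left_le)
  show "real (piv n x) \<le> real n * x" using a unfolding piv_def by (auto simp: min_def)
  show "real n * x \<le> real (piv n x) + 1"
  proof (cases "?A \<le> n - 1")
    case True then show ?thesis using a by (simp add: piv_def min_def)
  next
    case False then show ?thesis using nx assms by (simp add: piv_def min_def of_nat_diff)
  qed
qed

lemma nat_clamp: 
  fixes A B n :: nat
  assumes "B \<le> A" "A \<le> B + 1" "A \<le> n" "B \<le> n - 1" "n \<ge> 2"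
  shows "min B (n - 2) = min A (n - 1) \<or> (min A (n - 1) \<ge> 1 \<and> min B (n - 2) = min A (n - 1) - 1)"
  using assms unfolding min_def by (simp split: if_splits; presburger)

lemma piv_rel:
  assumes "0 \<le> x" "x \<le> 1" "n \<ge> 2"
  shows "piv (n - 1) x = piv n x \<or> (piv n x \<ge> 1 \<and> piv (n - 1) x = piv n x - 1)"
proof -
  let ?A = "nat \<lfloor>real n * x\<rfloor>" and ?B = "nat \<lfloor>real (n - 1) * x\<rfloor>"
  have e: "real (n - 1) * x = real n * x - x" using assms by (simp add: of_nat_diff algebra_simps)
  have fl1: "\<lfloor>real (n - 1) * x\<rfloor> \<le> \<lfloor>real n * x\<rfloor>" using e assms by (intro floor_mono) simp
  have fl2: "\<lfloor>real n * x\<rfloor> \<le> \<lfloor>real (n - 1) * x\<rfloor> + 1"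
  proof -
    have "\<lfloor>real n * x\<rfloor> \<le> \<lfloor>real (n - 1) * x + 1\<rfloor>" using e assms by (intro floor_mono) simp
    then show ?thesis by simp
  qed
  have nn: "0 \<le> \<lfloor>real (n - 1) * x\<rfloor>" using assms by simp
  have "B \<le> A" if "B = ?B" "A = ?A" for A B using fl1 nn that by linarith
  have BA: "?B \<le> ?A" using fl1 nn by linarith
  have AB: "?A \<le> ?B + 1" using fl2 nn by linarith
  have "\<lfloor>real n * x\<rfloor> \<le> \<lfloor>real n\<rfloor>" using assms by (intro floor_mono) (simp add: mult_left_le)
  then have An: "?A \<le> n" by simp
  have "\<lfloor>real (n - 1) * x\<rfloor> \<le> \<lfloor>real (n - 1)\<rfloor>" using assms by (intro floor_mono) (simp add: mult_left_le)
  then have Bn: "?B \<le> n - 1" by linarith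
  have "n - 1 - 1 = n - 2" by simp
  then show ?thesis using nat_clamp[OF BA AB An Bn assms(3)] unfolding piv_def by (simp add: numeral_2_eq_2)
qed

lemma emeasure_Uu_Icc: "a \<le> b \<Longrightarrow> emeasure Uu {a..b} \<le> ennreal (b - a)"
proof -
  assume ab: "a \<le> b"
  have "emeasure Uu {a..b} = emeasure lborel ({0..1} \<inter> {a..b}) / emeasure lborel {0..1::real}"
    by (subst emeasure_uniform_measure) auto
  also have "\<dots> = emeasure lborel ({0..1} \<inter> {a..b})" by (simp add: divide_ennreal_def)
  also have "\<dots> \<le> emeasure lborel {a..b}" by (intro emeasure_mono) auto
  also have "\<dots> = ennreal (b - a)" using ab by simp
  finally show ?thesis .
qed

lemma pivot1:
  assumes "n \<ge> 1"
  shows "(\<integral>\<^sup>+x. h (piv n x) \<partial>Uu) \<le> (\<Sum>v<n. ennreal (1 / real n) * h v)"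
proof -
  have "(\<integral>\<^sup>+x. h (piv n x) \<partial>Uu) \<le> (\<integral>\<^sup>+x. (\<Sum>v<n. h v * indicator {real v / n .. (real v + 1) / n} x) \<partial>Uu)"
  proof (rule nn_integral_mono_AE)
    show "AE x in Uu. h (piv n x) \<le> (\<Sum>v<n. h v * indicator {real v / n .. (real v + 1) / n} x)"
    proof (rule AE_uniform_measureI, simp, rule AE_I2, rule impI)
      fix x :: real assume x: "x \<in> {0..1}"
      let ?v = "piv n x"
      have vn: "?v < n" using assms unfolding piv_def by auto
      have "x \<in> {real ?v / n .. (real ?v + 1) / n}"
        using piv_bounds[of x n] x assms by (auto simp: field_simps)
      then have "h ?v = h ?v * indicator {real ?v / n .. (real ?v + 1) / n} x" by simp
      also have "\<dots> \<le> (\<Sum>v<n. h v * indicator {real v / n .. (real v + 1) / n} x)"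
        by (rule member_le_sum[where f = "\<lambda>v. h v * indicator {real v / n .. (real v + 1) / n} x"]) (use vn in auto)
      finally show "h ?v \<le> (\<Sum>v<n. h v * indicator {real v / n .. (real v + 1) / n} x)" .
    qed
  qed
  also have "\<dots> = (\<Sum>v<n. h v * emeasure Uu {real v / n .. (real v + 1) / n})"
    by (subst nn_integral_sum) (auto simp: nn_integral_cmult_indicator)
  also have "\<dots> \<le> (\<Sum>v<n. ennreal (1 / real n) * h v)"
  proof (rule sum_mono)
    fix v assume "v \<in> {..<n}"
    have "emeasure Uu {real v / n .. (real v + 1) / n} \<le> ennreal ((real v + 1) / n - real v / n)"
      using assms by (intro emeasure_Uu_Icc) (simp add: divide_right_mono)
    also have "(real v + 1) / n - real v / n = 1 / n" by (simp add: diff_divide_distrib[symmetric])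
    finally show "h v * emeasure Uu {real v / n .. (real v + 1) / n} \<le> ennreal (1 / real n) * h v"
      by (simp add: mult.commute mult_left_mono)
  qed
  finally show ?thesis .
qed

lemma pivot2:
  assumes "n \<ge> 2"
  shows "(\<integral>\<^sup>+x. h (piv n x) (piv (n - 1) x) \<partial>Uu) \<le> (\<Sum>v<n. ennreal ((real v + 1) / n - real v / (n - 1)) * h v v
      + ennreal (real v / (n - 1) - real v / n) * h v (v - 1))"
proof -
  define I0 where "I0 v = {real v / (n - 1) .. (real v + 1) / n}" for v
  define I1 where "I1 v = {real v / n .. real v / (n - 1)}" for v
  have n1: "real (n - 1) = real n - 1" using assms by (simp add: of_nat_diff)
  have "(\<integral>\<^sup>+x. h (piv n x) (piv (n - 1) x) \<partial>Uu) \<le> (\<integral>\<^sup>+x. (\<Sum>v<n. h v v * indicator (I0 v) x + h v (v - 1) * indicator (I1 v) x) \<partial>Uu)"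
  proof (rule nn_integral_mono_AE)
    show "AE x in Uu. h (piv n x) (piv (n - 1) x) \<le> (\<Sum>v<n. h v v * indicator (I0 v) x + h v (v - 1) * indicator (I1 v) x)"
    proof (rule AE_uniform_measureI, simp, rule AE_I2, rule impI)
      fix x :: real assume x: "x \<in> {0..1}"
      let ?v = "piv n x" and ?w = "piv (n - 1) x"
      have vn: "?v < n" using assms unfolding piv_def by auto
      have b1: "real ?v \<le> real n * x" "real n * x \<le> real ?v + 1" using piv_bounds[of x n] x assms by auto
      have b2: "real ?w \<le> real (n - 1) * x" "real (n - 1) * x \<le> real ?w + 1" using piv_bounds[of x "n - 1"] x assms by auto
      have np: "real n > 1" using assms by simp
      have "h ?v ?w \<le> h ?v ?v * indicator (I0 ?v) x + h ?v (?v - 1) * indicator (I1 ?v) x"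
      proof (cases "?w = ?v")
        case True
        have "x \<in> I0 ?v" unfolding I0_def using b1 b2 True np n1 by (auto simp: field_simps)
        then show ?thesis using True by simp
      next
        case False
        then have w: "?w = ?v - 1" "?v \<ge> 1" using piv_rel[of x n] x assms by auto
        then have "real ?w + 1 = real ?v" by simp
        then have "x \<in> I1 ?v" unfolding I1_def using b1 b2 np n1 by (auto simp: field_simps)
        then show ?thesis using w by simp
      qed
      also have "\<dots> \<le> (\<Sum>v<n. h v v * indicator (I0 v) x + h v (v - 1) * indicator (I1 v) x)"
        by (rule member_le_sum[where f = "\<lambda>v. h v v * indicator (I0 v) x + h v (v - 1) * indicator (I1 v) x"]) (use vn in auto)
      finally show "h ?v ?w \<le> (\<Sum>v<n. h v v * indicator (I0 v) x + h v (v - 1) * indicator (I1 v) x)" .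
    qed
  qed
  also have "\<dots> = (\<Sum>v<n. h v v * emeasure Uu (I0 v) + h v (v - 1) * emeasure Uu (I1 v))"
    by (subst nn_integral_sum) (auto simp: nn_integral_cmult_indicator I0_def I1_def nn_integral_add)
  also have "\<dots> \<le> (\<Sum>v<n. ennreal ((real v + 1) / n - real v / (n - 1)) * h v v
      + ennreal (real v / (n - 1) - real v / n) * h v (v - 1))"
  proof (rule sum_mono)
    fix v assume v: "v \<in> {..<n}"
    have np: "real n > 1" using assms by simp
    have "real v / (n - 1) \<le> (real v + 1) / n"
      using v np by (simp add: field_simps)
    then have "emeasure Uu (I0 v) \<le> ennreal ((real v + 1) / n - real v / (n - 1))"
      unfolding I0_def n1 by (intro emeasure_Uu_Icc) (simp add: n1)
    moreover have "real v / n \<le> real v / (n - 1)"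
      using np by (simp add: frac_le)
    then have "emeasure Uu (I1 v) \<le> ennreal (real v / (n - 1) - real v / n)"
      unfolding I1_def n1 by (intro emeasure_Uu_Icc) (simp add: n1)
    ultimately show "h v v * emeasure Uu (I0 v) + h v (v - 1) * emeasure Uu (I1 v) \<le>
      ennreal ((real v + 1) / n - real v / (n - 1)) * h v v + ennreal (real v / (n - 1) - real v / n) * h v (v - 1)"
      by (intro add_mono) (simp_all add: mult.commute mult_left_mono n1)
  qed
  finally show ?thesis .
qed



lemma sum_ge_real:
  assumes "j \<le> N"
  shows "(\<Sum>v<N. if j \<le> v then real v else 0) = (real N * (real N - 1) - real j * (real j - 1)) / 2"
  using assms
proof (induction N rule: dec_induct)
  case base
  then show ?case by simp
next
  case (step n)
  then show ?case by (simp add: field_simps)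
qed

lemma sum_lt_restrict:
  fixes k N :: nat
  assumes "k \<le> N"
  shows "(\<Sum>v<N. if v < k then f v else 0) = (\<Sum>v<k. f v)"
  using assms
proof (induction N rule: dec_induct)
  case base
  then show ?case by (intro sum.cong) auto
next
  case (step n)
  then show ?case by simp
qed

lemma gauss_real: "(\<Sum>v<k. real v) = real k * (real k - 1) / 2"
  by (induction k) (simp_all add: field_simps)

lemma sum_rev_lin: "(\<Sum>v<k. real (N - 1 - v)) = real k * (real N - 1) - real k * (real k - 1) / 2"
  if "k \<le> N" 
proof -
  have "(\<Sum>v<k. real (N - 1 - v)) = (\<Sum>v<k. (real N - 1) - real v)"
    using that by (intro sum.cong) (auto simp: of_nat_diff)
  also have "\<dots> = real k * (real N - 1) - (\<Sum>v<k. real v)" by (simp add: sum_subtractf)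
  finally show ?thesis by (simp add: gauss_real)
qed

lemma sum_B: "(\<Sum>v<k. 2 + 16 * real (k - v)) = 2 * real k + 8 * real k * (real k + 1)"
proof -
  have "(\<Sum>v<k. 2 + 16 * real (k - v)) = (\<Sum>v<k. 2 + 16 * (real k - real v))"
    by (intro sum.cong) (auto simp: of_nat_diff)
  also have "\<dots> = 2 * real k + 16 * (real k * real k) - 16 * (\<Sum>v<k. real v)"
    by (simp add: sum.distrib sum_subtractf sum_distrib_left[symmetric] sum_distrib_right algebra_simps)
  finally have e: "(\<Sum>v<k. 2 + 16 * real (k - v)) = 2 * real k + 16 * (real k * real k) - 16 * (\<Sum>v<k. real v)" .
  show ?thesis unfolding e gauss_real by (simp add: field_simps)
qed

lemma EC_real_ineq:
  assumes "1 \<le> j" "j \<le> N"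
  shows "(\<Sum>v<N. (1 / real N) * (real (N - 1) + (if j \<le> v then 4 * real v else 0)
           + (if v < j - 1 then 4 * real (N - 1 - v) else 0))) \<le> 4 * real N"
proof -
  have N0: "real N > 0" using assms by simp
  have e0: "(\<Sum>v<N. (1 / real N) * (real (N - 1) + (if j \<le> v then 4 * real v else 0)
           + (if v < j - 1 then 4 * real (N - 1 - v) else 0)))
     = (1 / real N) * (real N * real (N - 1) + 4 * (\<Sum>v<N. if j \<le> v then real v else 0)
           + 4 * (\<Sum>v<N. if v < j - 1 then real (N - 1 - v) else 0))"
  proof -
    have c1: "(\<Sum>v<N. if j \<le> v then 4 * real v else 0) = 4 * (\<Sum>v<N. if j \<le> v then real v else 0)"
      by (subst sum_distrib_left) (intro sum.cong, auto)
    have c2: "(\<Sum>v<N. if v < j - 1 then 4 * real (N - 1 - v) else 0) = 4 * (\<Sum>v<N. if v < j - 1 then real (N - 1 - v) else 0)"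
      by (subst sum_distrib_left) (intro sum.cong, auto)
    show ?thesis
      using assms by (simp only: sum_distrib_left[symmetric] sum.distrib c1 c2) (simp add: of_nat_diff)
  qed
  have s2: "(\<Sum>v<N. if v < j - 1 then real (N - 1 - v) else 0) = real (j - 1) * (real N - 1) - real (j - 1) * (real (j - 1) - 1) / 2"
  proof -
    have "(\<Sum>v<N. if v < j - 1 then real (N - 1 - v) else 0) = (\<Sum>v<j-1. real (N - 1 - v))"
      using assms by (intro sum_lt_restrict) simp
    also have "\<dots> = real (j - 1) * (real N - 1) - real (j - 1) * (real (j - 1) - 1) / 2"
      using assms by (intro sum_rev_lin) simp
    finally show ?thesis .
  qed
  have s1: "(\<Sum>v<N. if j \<le> v then real v else 0) = (real N * (real N - 1) - real j * (real j - 1)) / 2"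
    using assms by (intro sum_ge_real)
  have sq: "0 \<le> (real N + 1 - 2 * real j)^2" by simp
  have j1: "real (j - 1) = real j - 1" "real (N - 1) = real N - 1" using assms by (auto simp: of_nat_diff)
  have "real N * (real N - 1) + 4 * ((real N * (real N - 1) - real j * (real j - 1)) / 2)
        + 4 * ((real j - 1) * (real N - 1) - (real j - 1) * (real j - 1 - 1) / 2) \<le> 4 * real N * real N"
  proof -
    have r: "real j \<ge> 1" "real N \<ge> real j" using assms by auto
    have e1: "real N * (real N - 1) + 4 * ((real N * (real N - 1) - real j * (real j - 1)) / 2)
        + 4 * ((real j - 1) * (real N - 1) - (real j - 1) * (real j - 1 - 1) / 2)
        = 3 * (real N * real N) - 7 * real N - 4 * (real j * real j) + 4 * real j + 4 * (real N * real j)"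
      by (simp add: field_simps)
    have e2: "(real N + 1 - 2 * real j)^2 = real N * real N + 1 + 4 * (real j * real j) + 2 * real N
       - 4 * (real N * real j) - 4 * real j"
      by (simp add: algebra_simps power2_eq_square)
    show ?thesis unfolding e1 using sq r e2 by linarith
  qed
  then have "(1 / real N) * (real N * (real N - 1) + 4 * ((real N * (real N - 1) - real j * (real j - 1)) / 2)
        + 4 * ((real j - 1) * (real N - 1) - (real j - 1) * (real j - 1 - 1) / 2)) \<le> 4 * real N"
    using N0 by (simp add: field_simps)
  then show ?thesis unfolding e0 s1 s2 by (simp only: j1)
qed

lemma poly_ineq:
  fixes a b :: real
  assumes "b \<ge> 0" "a \<ge> b + 1"
  shows "a * b * (28 + 24 * b) \<le> 16 * (b + 1) * (a + 1) * a + (18 + 16 * b) * (b + 1) * b"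
proof -
  have a0: "a \<ge> 0" using assms by simp
  have h1: "b * (a - b)^2 \<ge> 0" using assms by simp
  have h2: "a * b * b \<ge> 0" "a * b \<ge> 0" "b * b \<ge> 0" using assms a0 by simp_all
  have h3: "(4 * a - 3/2 * b)^2 \<ge> 0" by simp
  have e1: "b * (a - b)^2 = a*a*b - 2 * (a*b*b) + b*b*b" by (simp add: power2_eq_square algebra_simps)
  have e2: "(4 * a - 3/2 * b)^2 = 16 * (a*a) - 12 * (a*b) + 9/4 * (b*b)" by (simp add: power2_eq_square algebra_simps)
  have e3: "a * b * (28 + 24 * b) = 28 * (a*b) + 24 * (a*b*b)" by (simp add: algebra_simps)
  have e4: "16 * (b + 1) * (a + 1) * a + (18 + 16 * b) * (b + 1) * b
     = 16 * (a*a*b) + 16 * (a*a) + 16 * (a*b) + 16 * a + 16 * (b*b*b) + 34 * (b*b) + 18 * b"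
    by (simp add: algebra_simps)
  show ?thesis unfolding e3 e4 using h1 h2 h3 e1 e2 a0 assms by linarith
qed

lemma T_real_ineq:
  fixes m n :: nat
  assumes m1: "m \<ge> 1" and nm: "n \<ge> m + 1"
  shows "(\<Sum>v<n. ((real v + 1) / real n - real v / real (n - 1)) * (1 + (if v < m - 1 then 2 + 16 * real (m - 1 - v) else 0))
     + (real v / real (n - 1) - real v / real n) * (1 + (if m \<le> v then 2 + 16 * real m else 0)
        + (if v < m then 8 * real (n - 1 - v) else 0))) \<le> 2 + 16 * real m"
proof -
  define N where "N = real n"
  define M where "M = real m"
  have N1: "real (n - 1) = N - 1" using nm by (simp add: N_def of_nat_diff)
  have NM: "N \<ge> M + 1" "M \<ge> 1" using nm m1 by (simp_all add: N_def M_def)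
  have Npos: "N > 1" using NM by simp
  define p0 where "p0 v = (real v + 1) / N - real v / (N - 1)" for v :: nat
  define p1 where "p1 v = real v / (N - 1) - real v / N" for v :: nat
  define A where "A v = (if v < m - 1 then 2 + 16 * real (m - 1 - v) else 0)" for v
  define Bv where "Bv v = (if m \<le> v then 2 + 16 * M else 0)" for v
  define Cv where "Cv v = (if v < m then 8 * real (n - 1 - v) else 0)" for v
  have d: "1 / (N - 1) - 1 / N = 1 / (N * (N - 1))"
    using Npos by (simp add: field_simps)
  have p1e: "p1 v = real v / (N * (N - 1))" for v
  proof -
    have "p1 v = real v * (1 / (N - 1) - 1 / N)" by (simp add: p1_def algebra_simps)
    then show ?thesis unfolding d by simp
  qed
  have p01: "p0 v + p1 v = 1 / N" for v
    unfolding p0_def p1_def by (simp add: add_divide_distrib)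
  have p0le: "p0 v \<le> 1 / N" for v
  proof -
    have "p1 v \<ge> 0" unfolding p1e using Npos by simp
    then show ?thesis using p01[of v] by linarith
  qed
  have A0: "A v \<ge> 0" for v by (simp add: A_def del: of_nat_diff)
  have C0: "Cv v \<ge> 0" for v by (simp add: Cv_def)
  have "(\<Sum>v<n. p0 v * (1 + A v) + p1 v * (1 + Bv v + Cv v))
      = (\<Sum>v<n. (p0 v + p1 v)) + (\<Sum>v<n. p0 v * A v) + (\<Sum>v<n. p1 v * Bv v) + (\<Sum>v<n. p1 v * Cv v)"
    by (simp add: sum.distrib[symmetric] algebra_simps)
  also have "(\<Sum>v<n. (p0 v + p1 v)) = 1" unfolding p01 using Npos by (simp add: N_def)
  also have "(\<Sum>v<n. p0 v * A v) \<le> (\<Sum>v<n. (1 / N) * A v)"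
    by (intro sum_mono mult_right_mono p0le A0)
  also have "(\<Sum>v<n. (1 / N) * A v) = (1 / N) * (\<Sum>v<m-1. 2 + 16 * real (m - 1 - v))"
    unfolding sum_distrib_left[symmetric] A_def using nm by (subst sum_lt_restrict) auto
  also have "(\<Sum>v<m-1. 2 + 16 * real (m - 1 - v)) = 2 * (M - 1) + 8 * (M - 1) * M"
    using sum_B[of "m - 1"] m1 by (simp add: M_def of_nat_diff)
  also have "(\<Sum>v<n. p1 v * Bv v) = (2 + 16 * M) / (N * (N - 1)) * (\<Sum>v<n. if m \<le> v then real v else 0)"
    unfolding sum_distrib_left by (intro sum.cong) (auto simp: p1e Bv_def)
  also have "(\<Sum>v<n. if m \<le> v then real v else 0) = (N * (N - 1) - M * (M - 1)) / 2"
    using nm by (subst sum_ge_real) (auto simp: N_def M_def)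
  also have "(\<Sum>v<n. p1 v * Cv v) \<le> (\<Sum>v<n. if v < m then 8 / N * real v else 0)"
  proof (intro sum_mono)
    fix v assume v: "v \<in> {..<n}"
    show "p1 v * Cv v \<le> (if v < m then 8 / N * real v else 0)"
    proof (cases "v < m")
      case True
      have "real (n - 1 - v) \<le> N - 1" using N1 by (simp add: N_def)
      then have "real v / (N * (N - 1)) * (8 * real (n - 1 - v)) \<le> real v / (N * (N - 1)) * (8 * (N - 1))"
        using Npos by (intro mult_left_mono) auto
      also have "\<dots> = 8 / N * real v" using Npos by (simp add: field_simps)
      finally show ?thesis using True by (simp add: p1e Cv_def)
    qed (simp add: Cv_def)
  qed
  also have "(\<Sum>v<n. if v < m then 8 / N * real v else 0) = 8 / N * (M * (M - 1) / 2)"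
  proof -
    have "(\<Sum>v<n. if v < m then 8 / N * real v else 0) = (\<Sum>v<m. 8 / N * real v)"
      using nm by (intro sum_lt_restrict) auto
    also have "\<dots> = 8 / N * (\<Sum>v<m. real v)" by (simp only: sum_distrib_left)
    finally show ?thesis by (simp only: gauss_real M_def)
  qed
  finally have S: "(\<Sum>v<n. p0 v * (1 + A v) + p1 v * (1 + Bv v + Cv v)) \<le>
     1 + 1 / N * (2 * (M - 1) + 8 * (M - 1) * M) + (2 + 16 * M) / (N * (N - 1)) * ((N * (N - 1) - M * (M - 1)) / 2)
     + 8 / N * (M * (M - 1) / 2)" by simp
  have P: "(N - 1) * (M - 1) * (28 + 24 * (M - 1)) \<le> 16 * (M - 1 + 1) * (N - 1 + 1) * (N - 1) + (18 + 16 * (M - 1)) * (M - 1 + 1) * (M - 1)"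
    using poly_ineq[of "M - 1" "N - 1"] NM by simp
  have "1 + 1 / N * (2 * (M - 1) + 8 * (M - 1) * M) + (2 + 16 * M) / (N * (N - 1)) * ((N * (N - 1) - M * (M - 1)) / 2)
     + 8 / N * (M * (M - 1) / 2) = 
     (2 * N * (N - 1) + 2 * (N - 1) * (2 * (M - 1) + 8 * (M - 1) * M) + (2 + 16 * M) * (N * (N - 1) - M * (M - 1))
      + 8 * M * (M - 1) * (N - 1)) / (2 * N * (N - 1))"
    using Npos by (simp add: field_simps)
  also have "\<dots> \<le> 2 + 16 * M"
  proof -
    have "2 * N * (N - 1) + 2 * (N - 1) * (2 * (M - 1) + 8 * (M - 1) * M) + (2 + 16 * M) * (N * (N - 1) - M * (M - 1))
      + 8 * M * (M - 1) * (N - 1) \<le> (2 + 16 * M) * (2 * N * (N - 1))"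
      using P by (simp add: algebra_simps)
    then show ?thesis using Npos by (simp add: divide_le_eq)
  qed
  finally have F: "1 + 1 / N * (2 * (M - 1) + 8 * (M - 1) * M) + (2 + 16 * M) / (N * (N - 1)) * ((N * (N - 1) - M * (M - 1)) / 2)
     + 8 / N * (M * (M - 1) / 2) \<le> 2 + 16 * M" .
  have "(\<Sum>v<n. ((real v + 1) / real n - real v / real (n - 1)) * (1 + (if v < m - 1 then 2 + 16 * real (m - 1 - v) else 0))
     + (real v / real (n - 1) - real v / real n) * (1 + (if m \<le> v then 2 + 16 * real m else 0)
        + (if v < m then 8 * real (n - 1 - v) else 0))) = (\<Sum>v<n. p0 v * (1 + A v) + p1 v * (1 + Bv v + Cv v))"
    unfolding p0_def p1_def A_def Bv_def Cv_def N1 N_def M_def ..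
  then show ?thesis using S F by (simp add: M_def)
qed



lemma meas_qsel'[measurable]: "(\<lambda>u. real (qsel_cmp m n u)) \<in> borel_measurable unif_seq"
  by (rule meas_qsel)

lemma qsel_zero: "n < m \<or> m = 0 \<Longrightarrow> qsel_cmp m n u = 0"
  by (subst qsel_cmp.simps) simp

lemma qsel_unfold:
  assumes "m \<ge> 1" "n \<ge> m"
  shows "qsel_cmp m n (case_nat x w) = n - 1 + qsel_cmp m (piv n x) w
     + (if piv n x < m - 1 then qsel_cmp (m - 1 - piv n x) (n - 1 - piv n x) w else 0)"
proof -
  have e: "(\<lambda>i. case_nat x w (Suc i)) = w" by simp
  show ?thesis using assms by (subst qsel_cmp.simps) (simp add: qs_pivot_case e)
qed

lemma int_const_add:
  assumes [measurable]: "f \<in> borel_measurable unif_seq" and "\<And>w. f w \<ge> 0" "a \<ge> 0"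
  shows "(\<integral>\<^sup>+w. ennreal (a + f w) \<partial>unif_seq) = ennreal a + (\<integral>\<^sup>+w. ennreal (f w) \<partial>unif_seq)"
proof -
  interpret prob_space unif_seq by (rule prob_unif_seq)
  have "(\<integral>\<^sup>+w. ennreal (a + f w) \<partial>unif_seq) = (\<integral>\<^sup>+w. ennreal a + ennreal (f w) \<partial>unif_seq)"
    using assms by (intro nn_integral_cong) (simp add: ennreal_plus)
  also have "\<dots> = (\<integral>\<^sup>+w. ennreal a \<partial>unif_seq) + (\<integral>\<^sup>+w. ennreal (f w) \<partial>unif_seq)"
    by (rule nn_integral_add) auto
  also have "(\<integral>\<^sup>+w. ennreal a \<partial>unif_seq) = ennreal a"
    by (simp add: emeasure_space_1)
  finally show ?thesis .
qed

lemma int_add: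
  assumes [measurable]: "f \<in> borel_measurable unif_seq" "g \<in> borel_measurable unif_seq" and "\<And>w. f w \<ge> 0" "\<And>w. g w \<ge> 0"
  shows "(\<integral>\<^sup>+w. ennreal (f w + g w) \<partial>unif_seq) = (\<integral>\<^sup>+w. ennreal (f w) \<partial>unif_seq) + (\<integral>\<^sup>+w. ennreal (g w) \<partial>unif_seq)"
proof -
  have "(\<integral>\<^sup>+w. ennreal (f w + g w) \<partial>unif_seq) = (\<integral>\<^sup>+w. ennreal (f w) + ennreal (g w) \<partial>unif_seq)"
    using assms by (intro nn_integral_cong) (simp add: ennreal_plus)
  also have "\<dots> = (\<integral>\<^sup>+w. ennreal (f w) \<partial>unif_seq) + (\<integral>\<^sup>+w. ennreal (g w) \<partial>unif_seq)"
    by (rule nn_integral_add) auto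
  finally show ?thesis .
qed

lemma int_one: "(\<integral>\<^sup>+w. ennreal 1 \<partial>unif_seq) = 1"
proof -
  interpret prob_space unif_seq by (rule prob_unif_seq)
  show ?thesis by (simp add: emeasure_space_1)
qed

lemma EC_bound: "(\<integral>\<^sup>+u. ennreal (real (qsel_cmp j N u)) \<partial>unif_seq) \<le> ennreal (4 * real N)"
proof (induction N arbitrary: j rule: less_induct)
  case (less N)
  show ?case
  proof (cases "N < j \<or> j = 0")
    case True
    then show ?thesis by (simp add: qsel_zero)
  next
    case False
    then have j1: "j \<ge> 1" and jN: "j \<le> N" by auto
    then have N1: "N \<ge> 1" by simp
    define g where "g v = (\<integral>\<^sup>+w. ennreal (real (N - 1) + real (qsel_cmp j v w)
        + (if v < j - 1 then real (qsel_cmp (j - 1 - v) (N - 1 - v) w) else 0)) \<partial>unif_seq)" for v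
    define r where "r v = real (N - 1) + (if j \<le> v then 4 * real v else 0)
           + (if v < j - 1 then 4 * real (N - 1 - v) else 0)" for v
    have "(\<integral>\<^sup>+u. ennreal (real (qsel_cmp j N u)) \<partial>unif_seq)
        = (\<integral>\<^sup>+x. (\<integral>\<^sup>+w. ennreal (real (qsel_cmp j N (case_nat x w))) \<partial>unif_seq) \<partial>Uu)"
      by (rule decomp) measurable
    also have "\<dots> = (\<integral>\<^sup>+x. g (piv N x) \<partial>Uu)"
    proof -
      have pw: "real (qsel_cmp j N (case_nat x w)) = real (N - 1) + real (qsel_cmp j (piv N x) w)
        + (if piv N x < j - 1 then real (qsel_cmp (j - 1 - piv N x) (N - 1 - piv N x) w) else 0)" for x w
        by (simp add: qsel_unfold[OF j1 jN] del: of_nat_diff)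
      show ?thesis by (simp only: pw g_def)
    qed
    also have "\<dots> \<le> (\<Sum>v<N. ennreal (1 / real N) * g v)"
      using N1 by (rule pivot1)
    also have "\<dots> \<le> (\<Sum>v<N. ennreal (1 / real N) * ennreal (r v))"
    proof (intro sum_mono mult_left_mono)
      fix v assume v: "v \<in> {..<N}"
      have a: "(\<integral>\<^sup>+w. ennreal (real (qsel_cmp j v w)) \<partial>unif_seq) \<le> ennreal (if j \<le> v then 4 * real v else 0)"
      proof (cases "j \<le> v")
        case True then show ?thesis using less[of v j] v by simp
      next
        case False then show ?thesis by (simp add: qsel_zero)
      qed
      have b: "(\<integral>\<^sup>+w. ennreal (if v < j - 1 then real (qsel_cmp (j - 1 - v) (N - 1 - v) w) else 0) \<partial>unif_seq)
          \<le> ennreal (if v < j - 1 then 4 * real (N - 1 - v) else 0)"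
      proof (cases "v < j - 1")
        case True then show ?thesis using less[of "N - 1 - v" "j - 1 - v"] v by simp
      next
        case False then show ?thesis by simp
      qed
      have "g v = ennreal (real (N - 1)) + ((\<integral>\<^sup>+w. ennreal (real (qsel_cmp j v w)) \<partial>unif_seq)
          + (\<integral>\<^sup>+w. ennreal (if v < j - 1 then real (qsel_cmp (j - 1 - v) (N - 1 - v) w) else 0) \<partial>unif_seq))"
      proof -
        have m2: "(\<lambda>w. if v < j - 1 then real (qsel_cmp (j - 1 - v) (N - 1 - v) w) else 0) \<in> borel_measurable unif_seq"
          by (cases "v < j - 1") simp_all
        have "g v = ennreal (real (N - 1)) + (\<integral>\<^sup>+w. ennreal (real (qsel_cmp j v w)
          + (if v < j - 1 then real (qsel_cmp (j - 1 - v) (N - 1 - v) w) else 0)) \<partial>unif_seq)"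
          unfolding g_def by (subst add.assoc, rule int_const_add) (use m2 in auto)
        also have "(\<integral>\<^sup>+w. ennreal (real (qsel_cmp j v w)
          + (if v < j - 1 then real (qsel_cmp (j - 1 - v) (N - 1 - v) w) else 0)) \<partial>unif_seq)
          = (\<integral>\<^sup>+w. ennreal (real (qsel_cmp j v w)) \<partial>unif_seq)
          + (\<integral>\<^sup>+w. ennreal (if v < j - 1 then real (qsel_cmp (j - 1 - v) (N - 1 - v) w) else 0) \<partial>unif_seq)"
          by (rule int_add) (use m2 in auto)
        finally show ?thesis .
      qed
      also have "\<dots> \<le> ennreal (real (N - 1)) + (ennreal (if j \<le> v then 4 * real v else 0)
          + ennreal (if v < j - 1 then 4 * real (N - 1 - v) else 0))"
        by (intro add_mono a b order.refl)
      also have "\<dots> = ennreal (r v)"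
        unfolding r_def by (simp add: ennreal_plus[symmetric] add.assoc del: ennreal_plus)
      finally show "g v \<le> ennreal (r v)" .
    qed simp
    also have "\<dots> = ennreal (\<Sum>v<N. (1 / real N) * r v)"
    proof -
      have r0: "r v \<ge> 0" for v by (simp add: r_def del: of_nat_diff)
      have "(\<Sum>v<N. ennreal (1 / real N) * ennreal (r v)) = (\<Sum>v<N. ennreal ((1 / real N) * r v))"
        by (rule sum.cong[OF refl], rule ennreal_mult[symmetric]) (simp_all add: r0)
      also have "\<dots> = ennreal (\<Sum>v<N. (1 / real N) * r v)"
        by (rule sum_ennreal) (simp add: r0)
      finally show ?thesis .
    qed
    also have "\<dots> \<le> ennreal (4 * real N)"
      using EC_real_ineq[OF j1 jN] unfolding r_def by (intro ennreal_leI) simp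
    finally show ?thesis .
  qed
qed


lemma ennreal_add3:
  fixes x y z :: real
  assumes "x \<ge> 0" "y \<ge> 0" "z \<ge> 0"
  shows "ennreal 1 + (ennreal x + (ennreal y + ennreal z)) = ennreal (1 + (x + (y + z)))"
  using assms by (simp add: ennreal_plus[symmetric] del: ennreal_plus ennreal_1)

lemma T_bound:
  "m \<ge> 1 \<Longrightarrow> (\<integral>\<^sup>+u. ennreal \<bar>real (qsel_cmp m n u) - real (qsel_cmp m (n - 1) u)\<bar> \<partial>unif_seq)
     \<le> ennreal (2 + 16 * real m)"
proof (induction n arbitrary: m rule: less_induct)
  case (less n)
  note m1 = less.prems
  consider (lt) "n < m" | (eq) "n = m" | (gt) "n \<ge> m + 1" by linarith
  then show ?case
  proof cases
    case lt
    then show ?thesis by (simp add: qsel_zero)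
  next
    case eq
    have "(\<integral>\<^sup>+u. ennreal \<bar>real (qsel_cmp m n u) - real (qsel_cmp m (n - 1) u)\<bar> \<partial>unif_seq)
        = (\<integral>\<^sup>+u. ennreal (real (qsel_cmp m n u)) \<partial>unif_seq)"
      using eq m1 by (simp add: qsel_zero)
    also have "\<dots> \<le> ennreal (4 * real n)" by (rule EC_bound)
    also have "\<dots> \<le> ennreal (2 + 16 * real m)" using eq by (intro ennreal_leI) simp
    finally show ?thesis .
  next
    case gt
    have n2: "n \<ge> 2" using gt m1 by simp
    have nm1: "m \<le> n - 1" using gt by simp
    define R where "R v w = (if v < m - 1 then real (qsel_cmp (m - 1 - v) (n - 1 - v) w) else 0)" for v w
    define R2 where "R2 v w = (if v < m - 1 then real (qsel_cmp (m - 1 - v) (n - 1 - 1 - v) w) else 0)" for v w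
    have R_meas[measurable]: "(\<lambda>w. R v w) \<in> borel_measurable unif_seq" for v
      unfolding R_def by (cases "v < m - 1") simp_all
    have R2_meas[measurable]: "(\<lambda>w. R2 v w) \<in> borel_measurable unif_seq" for v
      unfolding R2_def by (cases "v < m - 1") simp_all
    have R0: "R v w \<ge> 0" "R2 v w \<ge> 0" for v w by (simp_all add: R_def R2_def)
    define h where "h v v' = (\<integral>\<^sup>+w. ennreal \<bar>(real (n - 1) + real (qsel_cmp m v w) + R v w)
       - (real (n - 1 - 1) + real (qsel_cmp m v' w) + R2 v' w)\<bar> \<partial>unif_seq)" for v v'
    define a where "a v = 1 + (if v < m - 1 then 2 + 16 * real (m - 1 - v) else 0)" for v
    define b where "b v = 1 + (if m \<le> v then 2 + 16 * real m else 0) + (if v < m then 8 * real (n - 1 - v) else 0)" for v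
    have a0: "a v \<ge> 0" for v by (simp add: a_def del: of_nat_diff)
    have b0: "b v \<ge> 0" for v by (simp add: b_def del: of_nat_diff)
    have pw: "real (qsel_cmp m n (case_nat x w)) = real (n - 1) + real (qsel_cmp m (piv n x) w) + R (piv n x) w" for x w
    proof -
      have "qsel_cmp m n (case_nat x w) = n - 1 + qsel_cmp m (piv n x) w
         + (if piv n x < m - 1 then qsel_cmp (m - 1 - piv n x) (n - 1 - piv n x) w else 0)"
        by (rule qsel_unfold) (use m1 gt in auto)
      then show ?thesis unfolding R_def by (simp only: of_nat_add if_distrib[of real] of_nat_0)
    qed
    have pw2: "real (qsel_cmp m (n - 1) (case_nat x w)) = real (n - 1 - 1) + real (qsel_cmp m (piv (n - 1) x) w)
        + R2 (piv (n - 1) x) w" for x w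
    proof -
      have "qsel_cmp m (n - 1) (case_nat x w) = n - 1 - 1 + qsel_cmp m (piv (n - 1) x) w
         + (if piv (n - 1) x < m - 1 then qsel_cmp (m - 1 - piv (n - 1) x) (n - 1 - 1 - piv (n - 1) x) w else 0)"
        by (rule qsel_unfold) (use m1 nm1 in auto)
      then show ?thesis unfolding R2_def by (simp only: of_nat_add if_distrib[of real] of_nat_0)
    qed
    have n11: "real (n - 1) - real (n - 1 - 1) = 1" using n2 by (simp add: of_nat_diff)
    have H0: "h v v \<le> ennreal (a v)" if v: "v < n" for v
    proof (cases "v < m - 1")
      case True
      define j where "j = m - 1 - v"
      define N where "N = n - 1 - v"
      have j1: "j \<ge> 1" and Nn: "N < n" using True v n2 by (auto simp: j_def N_def)
      have NN: "n - 1 - 1 - v = N - 1" by (simp add: N_def)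
      have "h v v \<le> (\<integral>\<^sup>+w. ennreal (1 + \<bar>real (qsel_cmp j N w) - real (qsel_cmp j (N - 1) w)\<bar>) \<partial>unif_seq)"
        unfolding h_def
      proof (rule nn_integral_mono, rule ennreal_leI)
        fix w
        have "(real (n - 1) + real (qsel_cmp m v w) + R v w) - (real (n - 1 - 1) + real (qsel_cmp m v w) + R2 v w)
            = 1 + (real (qsel_cmp j N w) - real (qsel_cmp j (N - 1) w))"
          using True n11 by (simp add: R_def R2_def j_def N_def NN[symmetric] del: of_nat_diff)
        then show "\<bar>(real (n - 1) + real (qsel_cmp m v w) + R v w) - (real (n - 1 - 1) + real (qsel_cmp m v w) + R2 v w)\<bar>
            \<le> 1 + \<bar>real (qsel_cmp j N w) - real (qsel_cmp j (N - 1) w)\<bar>" by simp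
      qed
      also have "\<dots> = ennreal 1 + (\<integral>\<^sup>+w. ennreal \<bar>real (qsel_cmp j N w) - real (qsel_cmp j (N - 1) w)\<bar> \<partial>unif_seq)"
        by (rule int_const_add) auto
      also have "\<dots> \<le> ennreal 1 + ennreal (2 + 16 * real j)"
        by (intro add_mono order.refl less.IH[OF Nn j1])
      also have "\<dots> = ennreal (1 + (2 + 16 * real j))" by (rule ennreal_plus[symmetric]) auto
      also have "\<dots> = ennreal (a v)" using True by (simp add: a_def j_def del: of_nat_diff)
      finally show ?thesis .
    next
      case False
      have "h v v = (\<integral>\<^sup>+w. ennreal 1 \<partial>unif_seq)"
        unfolding h_def
      proof (rule nn_integral_cong)
        fix w
        have "(real (n - 1) + real (qsel_cmp m v w) + R v w) - (real (n - 1 - 1) + real (qsel_cmp m v w) + R2 v w) = 1"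
          using False n11 by (simp add: R_def R2_def del: of_nat_diff)
        then show "ennreal \<bar>(real (n - 1) + real (qsel_cmp m v w) + R v w) - (real (n - 1 - 1) + real (qsel_cmp m v w) + R2 v w)\<bar> = ennreal 1"
          by simp
      qed
      also have "\<dots> = ennreal (a v)" using False prob_space.emeasure_space_1[OF prob_unif_seq] by (simp add: a_def)
      finally show ?thesis by simp
    qed
    have H1: "h v (v - 1) \<le> ennreal (b v)" if v: "v < n" "v \<ge> 1" for v
    proof -
      define c where "c w = \<bar>real (qsel_cmp m v w) - real (qsel_cmp m (v - 1) w)\<bar>" for w
      have R2e: "R2 (v - 1) w = (if v < m then real (qsel_cmp (m - v) (n - 1 - v) w) else 0)" for w
      proof -
        have "m - 1 - (v - 1) = m - v" "n - 1 - 1 - (v - 1) = n - 1 - v" using v n2 by auto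
        then show ?thesis unfolding R2_def using v by auto
      qed
      have "h v (v - 1) \<le> (\<integral>\<^sup>+w. ennreal (1 + (c w + (R v w + R2 (v - 1) w))) \<partial>unif_seq)"
        unfolding h_def
      proof (rule nn_integral_mono, rule ennreal_leI)
        fix w
        have "(real (n - 1) + real (qsel_cmp m v w) + R v w) - (real (n - 1 - 1) + real (qsel_cmp m (v - 1) w) + R2 (v - 1) w)
          = 1 + (real (qsel_cmp m v w) - real (qsel_cmp m (v - 1) w)) + R v w - R2 (v - 1) w"
          using n11 by simp
        then show "\<bar>(real (n - 1) + real (qsel_cmp m v w) + R v w) - (real (n - 1 - 1) + real (qsel_cmp m (v - 1) w) + R2 (v - 1) w)\<bar>
           \<le> 1 + (c w + (R v w + R2 (v - 1) w))"
          using R0[of v w] R0[of "v - 1" w] unfolding c_def by linarith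
      qed
      also have "\<dots> = ennreal 1 + ((\<integral>\<^sup>+w. ennreal (c w) \<partial>unif_seq) + ((\<integral>\<^sup>+w. ennreal (R v w) \<partial>unif_seq)
            + (\<integral>\<^sup>+w. ennreal (R2 (v - 1) w) \<partial>unif_seq)))"
      proof -
        have cm[measurable]: "(\<lambda>w. c w) \<in> borel_measurable unif_seq" unfolding c_def by measurable
        have c0: "c w \<ge> 0" for w by (simp add: c_def)
        have "(\<integral>\<^sup>+w. ennreal (1 + (c w + (R v w + R2 (v - 1) w))) \<partial>unif_seq)
          = ennreal 1 + (\<integral>\<^sup>+w. ennreal (c w + (R v w + R2 (v - 1) w)) \<partial>unif_seq)"
          by (rule int_const_add[where f="\<lambda>w. c w + (R v w + R2 (v - 1) w)"])
             (measurable, use c0 R0 in \<open>auto intro: add_nonneg_nonneg\<close>)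
        also have "(\<integral>\<^sup>+w. ennreal (c w + (R v w + R2 (v - 1) w)) \<partial>unif_seq)
          = (\<integral>\<^sup>+w. ennreal (c w) \<partial>unif_seq) + (\<integral>\<^sup>+w. ennreal (R v w + R2 (v - 1) w) \<partial>unif_seq)"
          by (rule int_add[where f=c and g="\<lambda>w. R v w + R2 (v - 1) w"])
             (measurable, use c0 R0 in \<open>auto intro: add_nonneg_nonneg\<close>)
        also have "(\<integral>\<^sup>+w. ennreal (R v w + R2 (v - 1) w) \<partial>unif_seq)
          = (\<integral>\<^sup>+w. ennreal (R v w) \<partial>unif_seq) + (\<integral>\<^sup>+w. ennreal (R2 (v - 1) w) \<partial>unif_seq)"
          by (rule int_add[where f="\<lambda>w. R v w" and g="\<lambda>w. R2 (v - 1) w"])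
             (measurable, use R0 in auto)
        finally show ?thesis .
      qed
      also have "\<dots> \<le> ennreal 1 + (ennreal (if m \<le> v then 2 + 16 * real m else 0)
           + (ennreal (if v < m then 4 * real (n - 1 - v) else 0) + ennreal (if v < m then 4 * real (n - 1 - v) else 0)))"
      proof (intro add_mono order.refl)
        show "(\<integral>\<^sup>+w. ennreal (c w) \<partial>unif_seq) \<le> ennreal (if m \<le> v then 2 + 16 * real m else 0)"
        proof (cases "m \<le> v")
          case True then show ?thesis using less.IH[OF v(1) m1] by (simp add: c_def)
        next
          case False then show ?thesis by (simp add: c_def qsel_zero)
        qed
        show "(\<integral>\<^sup>+w. ennreal (R v w) \<partial>unif_seq) \<le> ennreal (if v < m then 4 * real (n - 1 - v) else 0)"
        proof (cases "v < m - 1")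
          case True
          have "(\<integral>\<^sup>+w. ennreal (R v w) \<partial>unif_seq) = (\<integral>\<^sup>+w. ennreal (real (qsel_cmp (m - 1 - v) (n - 1 - v) w)) \<partial>unif_seq)"
            using True by (simp add: R_def)
          also have "\<dots> \<le> ennreal (4 * real (n - 1 - v))" by (rule EC_bound)
          finally show ?thesis using True by simp
        next
          case False then show ?thesis by (simp add: R_def)
        qed
        show "(\<integral>\<^sup>+w. ennreal (R2 (v - 1) w) \<partial>unif_seq) \<le> ennreal (if v < m then 4 * real (n - 1 - v) else 0)"
        proof (cases "v < m")
          case True
          have "(\<integral>\<^sup>+w. ennreal (R2 (v - 1) w) \<partial>unif_seq) = (\<integral>\<^sup>+w. ennreal (real (qsel_cmp (m - v) (n - 1 - v) w)) \<partial>unif_seq)"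
            unfolding R2e using True by simp
          also have "\<dots> \<le> ennreal (4 * real (n - 1 - v))" by (rule EC_bound)
          finally show ?thesis using True by simp
        next
          case False then show ?thesis unfolding R2e by simp
        qed
      qed
      also have "\<dots> = ennreal (1 + ((if m \<le> v then 2 + 16 * real m else 0)
           + ((if v < m then 4 * real (n - 1 - v) else 0) + (if v < m then 4 * real (n - 1 - v) else 0))))"
        by (rule ennreal_add3) auto
      also have "\<dots> = ennreal (b v)" unfolding b_def by (intro arg_cong[where f=ennreal]) auto
      finally show ?thesis .
    qed
    define p0 where "p0 v = (real v + 1) / real n - real v / real (n - 1)" for v
    define p1 where "p1 v = real v / real (n - 1) - real v / real n" for v
    have np: "real n > 1" "real (n - 1) = real n - 1" using n2 by (auto simp: of_nat_diff)
    have p00: "p0 v \<ge> 0" if "v < n" for v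
    proof -
      have "real v \<le> real n - 1" using that by linarith
      then have "real v * real n \<le> (real v + 1) * (real n - 1)" by (simp add: algebra_simps)
      then have "real v / (real n - 1) \<le> (real v + 1) / real n" using np by (simp add: field_simps)
      then show ?thesis unfolding p0_def np by simp
    qed
    have p10: "p1 v \<ge> 0" for v
    proof -
      have "real v / real n \<le> real v / (real n - 1)" using np by (simp add: frac_le)
      then show ?thesis unfolding p1_def np by simp
    qed
    have p10': "p1 0 = 0" by (simp add: p1_def)
    have "(\<integral>\<^sup>+u. ennreal \<bar>real (qsel_cmp m n u) - real (qsel_cmp m (n - 1) u)\<bar> \<partial>unif_seq)
        = (\<integral>\<^sup>+x. (\<integral>\<^sup>+w. ennreal \<bar>real (qsel_cmp m n (case_nat x w)) - real (qsel_cmp m (n - 1) (case_nat x w))\<bar> \<partial>unif_seq) \<partial>Uu)"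
      by (rule decomp) measurable
    also have "\<dots> = (\<integral>\<^sup>+x. h (piv n x) (piv (n - 1) x) \<partial>Uu)"
      by (simp only: pw pw2 h_def)
    also have "\<dots> \<le> (\<Sum>v<n. ennreal ((real v + 1) / real n - real v / real (n - 1)) * h v v
      + ennreal (real v / real (n - 1) - real v / real n) * h v (v - 1))"
      by (rule pivot2[OF n2])
    also have "\<dots> \<le> (\<Sum>v<n. ennreal (p0 v) * ennreal (a v) + ennreal (p1 v) * ennreal (b v))"
    proof (rule sum_mono)
      fix v assume v: "v \<in> {..<n}"
      have "ennreal (p1 v) * h v (v - 1) \<le> ennreal (p1 v) * ennreal (b v)"
      proof (cases "v = 0")
        case True then show ?thesis by (simp add: p10')
      next
        case False then show ?thesis using H1[of v] v by (intro mult_left_mono) auto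
      qed
      moreover have "ennreal (p0 v) * h v v \<le> ennreal (p0 v) * ennreal (a v)"
        using H0[of v] v by (intro mult_left_mono) auto
      ultimately show "ennreal ((real v + 1) / real n - real v / real (n - 1)) * h v v
      + ennreal (real v / real (n - 1) - real v / real n) * h v (v - 1) \<le> ennreal (p0 v) * ennreal (a v) + ennreal (p1 v) * ennreal (b v)"
        unfolding p0_def p1_def using add_mono by blast
    qed
    also have "\<dots> = ennreal (\<Sum>v<n. p0 v * a v + p1 v * b v)"
    proof -
      have "(\<Sum>v<n. ennreal (p0 v) * ennreal (a v) + ennreal (p1 v) * ennreal (b v)) = (\<Sum>v<n. ennreal (p0 v * a v + p1 v * b v))"
      proof (rule sum.cong[OF refl])
        fix v assume "v \<in> {..<n}"
        then show "ennreal (p0 v) * ennreal (a v) + ennreal (p1 v) * ennreal (b v) = ennreal (p0 v * a v + p1 v * b v)"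
          using p00[of v] p10[of v] a0[of v] b0[of v]
          by (simp add: ennreal_mult[symmetric] ennreal_plus[symmetric] del: ennreal_plus)
      qed
      also have "\<dots> = ennreal (\<Sum>v<n. p0 v * a v + p1 v * b v)"
        by (rule sum_ennreal) (use p00 p10 a0 b0 in simp)
      finally show ?thesis .
    qed
    also have "\<dots> \<le> ennreal (2 + 16 * real m)"
      using T_real_ineq[OF m1 gt] unfolding p0_def a_def p1_def b_def by (intro ennreal_leI) simp
    finally show ?thesis .
  qed
qed

theorem lemma2p6:
  fixes m p :: nat
  assumes "m \<ge> 2" and "p \<ge> 1"
  shows "(\<integral>\<^sup>+ u. ennreal \<bar>real (qsel_cmp m p u) - real (qsel_cmp m (p - 1) u)\<bar> \<partial>unif_seq)
           \<le> ennreal (2 + 16 * real m)"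
  using T_bound[of m p] assms by simp

end
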